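(* Let $d_R\ge2$, let the glue code $H_G$ be compatible with the memory via $S,T$ and finely devised for $\Sigma$, and let $\gamma$ satisfy $J_{X,C}S^{\mathrm T}=\gamma H_G$. Let $P=P_{M\text{-}M}$ be the matrix such that $xP$ places $x\in\mathbb F_2^n$ on block $u_0$ and zeros elsewhere (so $yP^{\mathrm T}$ is the restriction of $y$ to $u_0$). Then $\mathrm{rs}H_X=\mathrm{rs}(H^{M\text{-}M}_XP^{\mathrm T})$, $\mathrm{rs}(H_ZP)\subseteq\mathrm{rs}H^{M\text{-}M}_Z$, $\mathrm{rs}J_{X,C}=\mathrm{rs}(J^{M\text{-}M}_XP^{\mathrm T})$, $\mathrm{rs}(J_{Z,C}P)=\mathrm{rs}J^{M\text{-}M}_Z$, and $\mathrm{rs}(J_{Z,A}P)\subseteq\mathrm{rs}H^{M\text{-}M}_Z$.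
   Context: All vectors are row vectors over $\mathbb F_2$; $\mathrm{rs}A$ is the row space, $\ker A=\{x:Ax^{\mathrm T}=0\}$, $VM=\{vM:v\in V\}$, $E_m$ the identity. The memory is a CSS subsystem code specified by $H_X\in\mathbb F_2^{r_X\times n}$, $H_Z\in\mathbb F_2^{r_Z\times n}$, $J_X,J_Z\in\mathbb F_2^{k\times n}$, $F_X,F_Z\in\mathbb F_2^{k_g\times n}$ satisfying $\ker H_X=\mathrm{rs}H_Z\oplus\mathrm{rs}J_Z\oplus\mathrm{rs}F_Z$, $\ker H_Z=\mathrm{rs}H_X\oplus\mathrm{rs}J_X\oplus\mathrm{rs}F_X$, $J_XJ_Z^{\mathrm T}=E_k$, $F_XF_Z^{\mathrm T}=E_{k_g}$. Let $v_1,\dots,v_q\in\mathrm{rs}J_Z$ be linearly independent (representing $\Sigma$), $J_{Z,A}$ the matrix with rows $v_1,\dots,v_q$; extend to a basis $v_1,\dots,v_k$ of $\mathrm{rs}J_Z$ and let $J_{Z,C}$ have rows $v_{q+1},\dots,v_k$. Let $\bar J_Z$ be the invertible $k\times k$ matrix with $\binom{J_{Z,A}}{J_{Z,C}}=\bar J_ZJ_Z$ and define $J_{X,A}\in\mathbb F_2^{q\times n}$, $J_{X,C}\in\mathbb F_2^{(k-q)\times n}$ by $\binom{J_{X,A}}{J_{X,C}}=(\bar J_Z^{-1})^{\mathrm T}J_X$. A glue code $H_G\in\mathbb F_2^{r_G\times n_G}$ is compatible via pasting matrices $S\in\mathbb F_2^{n_G\times n}$, $T\in\mathbb F_2^{r_X\times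 r_G}$ if $H_XS^{\mathrm T}=TH_G$; it is finely devised for $\Sigma$ if there exist $u_1,u_2,\dots\in\mathrm{rs}H_Z\oplus\mathrm{rs}F_Z$ with $\mathrm{span}(v_1,\dots,v_q,u_1,u_2,\dots)=(\ker H_G)S$. Measurement-sticker deformed code: coordinates are split into blocks $u_0\in\mathbb F_2^n$, $u_1,\dots,u_{d_R-1}\in\mathbb F_2^{n_G}$, $w_1,\dots,w_{d_R}\in\mathbb F_2^{r_G}$. $H^{M\text{-}M}_X$ has row-block $0$ equal to $H_X$ on $u_0$ and $T$ on $w_1$, and for $1\le j\le d_R-1$ row-block $j$ equal to $H_G$ on $u_j$, $E_{r_G}$ on $w_j$ and $E_{r_G}$ on $w_{j+1}$ (zero elsewhere). $H^{M\text{-}M}_Z$ has row-block $0$ equal to $H_Z$ on $u_0$, and for $1\le i\le d_R$ row-block $i$ equal to $S$ on $u_0$ (only if $i=1$), $E_{n_G}$ on $u_{i-1}$ (only if $i\ge2$), $E_{n_G}$ on $u_i$ (only if $i\le d_R-1$), and $H_G^{\mathrm T}$ on $w_i$. $J^{M\text{-}M}_X$ equals $J_{X,C}$ on $u_0$, $J_{X,C}S^{\mathrm T}$ on each of $u_1,\dots,u_{d_R-1}$, $0$ on $w_1,\dots,w_{d_R-1}$ and $\gamma$ on $w_{d_R}$; $J^{M\text{-}M}_Z$ equals $J_{Z,C}$ on $u_0$ and $0$ elsewhere. *)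

theory Defs
  imports "HOL-Library.Z2" "Jordan_Normal_Form.Matrix"
begin

text \<open>Vectors are row vectors over F_2 (type bit). The product x M of a row
vector x with a matrix M is the column-product of the transpose with x.\<close>

definition vm :: "'a::comm_semiring_0 vec \<Rightarrow> 'a mat \<Rightarrow> 'a vec" where
  "vm x M = transpose_mat M *\<^sub>v x"

definition rs :: "'a::comm_semiring_0 mat \<Rightarrow> 'a vec set" where
  "rs A = {vm v A | v. v \<in> carrier_vec (dim_row A)}"

definition kerm :: "'a::comm_semiring_0 mat \<Rightarrow> 'a vec set" where
  "kerm A = {x \<in> carrier_vec (dim_col A). A *\<^sub>v x = 0\<^sub>v (dim_row A)}"

definition set_sum :: "'a::plus vec set \<Rightarrow> 'a vec set \<Rightarrow> 'a vec set" where
  "set_sum A B = {a + b | a b. a \<in> A \<and> b \<in> B}"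

definition direct_sum3 :: "nat \<Rightarrow> 'a::comm_ring_1 vec set \<Rightarrow> 'a vec set \<Rightarrow> 'a vec set \<Rightarrow> 'a vec set \<Rightarrow> bool" where
  "direct_sum3 n V A B C \<longleftrightarrow>
     V = set_sum (set_sum A B) C \<and>
     (\<forall>a\<in>A. \<forall>b\<in>B. \<forall>c\<in>C. a + b + c = 0\<^sub>v n \<longrightarrow> a = 0\<^sub>v n \<and> b = 0\<^sub>v n \<and> c = 0\<^sub>v n)"

text \<open>Generic block matrices: nbr row blocks with sizes rsz 0, ..., rsz (nbr-1),
nbc column blocks with sizes csz 0, ..., and block (i,j) given by B i j
(which must be of size rsz i x csz j).\<close>

definition boff :: "(nat \<Rightarrow> nat) \<Rightarrow> nat \<Rightarrow> nat" where
  "boff sz i = (\<Sum>l<i. sz l)"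

definition bidx :: "(nat \<Rightarrow> nat) \<Rightarrow> nat \<Rightarrow> nat \<Rightarrow> nat" where
  "bidx sz nb r = (THE i. i < nb \<and> boff sz i \<le> r \<and> r < boff sz (Suc i))"

definition block_mat :: "nat \<Rightarrow> (nat \<Rightarrow> nat) \<Rightarrow> nat \<Rightarrow> (nat \<Rightarrow> nat) \<Rightarrow> (nat \<Rightarrow> nat \<Rightarrow> 'a mat) \<Rightarrow> 'a mat" where
  "block_mat nbr rsz nbc csz B =
     mat (boff rsz nbr) (boff csz nbc)
       (\<lambda>(r, c). let i = bidx rsz nbr r; j = bidx csz nbc c
                 in B i j $$ (r - boff rsz i, c - boff csz j))"

text \<open>Column blocks of the measurement-sticker deformed code, in the order
u_0, u_1, ..., u_{dR-1}, w_1, ..., w_{dR}: block index 0 is u_0, index j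
(1 <= j <= dR-1) is u_j, and index dR - 1 + i (1 <= i <= dR) is w_i.\<close>

definition mm_csz :: "nat \<Rightarrow> nat \<Rightarrow> nat \<Rightarrow> nat \<Rightarrow> nat \<Rightarrow> nat" where
  "mm_csz dR n nG rG j = (if j = 0 then n else if j < dR then nG else rG)"

abbreviation mm_nbc :: "nat \<Rightarrow> nat" where "mm_nbc dR \<equiv> 2 * dR"

definition HX_MM :: "nat \<Rightarrow> bit mat \<Rightarrow> bit mat \<Rightarrow> bit mat \<Rightarrow> bit mat" where
  "HX_MM dR HX HG T =
    (let n = dim_col HX; rX = dim_row HX; nG = dim_col HG; rG = dim_row HG;
         rsz = (\<lambda>i. if i = 0 then rX else rG); csz = mm_csz dR n nG rG
     in block_mat dR rsz (mm_nbc dR) csz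
        (\<lambda>i j. if i = 0 then
                  (if j = 0 then HX else if j = dR then T else 0\<^sub>m (rsz i) (csz j))
               else
                  (if j = i then HG
                   else if j = dR - 1 + i then 1\<^sub>m rG
                   else if j = dR + i then 1\<^sub>m rG
                   else 0\<^sub>m (rsz i) (csz j))))"

definition HZ_MM :: "nat \<Rightarrow> bit mat \<Rightarrow> bit mat \<Rightarrow> bit mat \<Rightarrow> bit mat" where
  "HZ_MM dR HZ HG S =
    (let n = dim_col HZ; rZ = dim_row HZ; nG = dim_col HG; rG = dim_row HG;
         rsz = (\<lambda>i. if i = 0 then rZ else nG); csz = mm_csz dR n nG rG
     in block_mat (Suc dR) rsz (mm_nbc dR) csz
        (\<lambda>i j. if i = 0 then
                  (if j = 0 then HZ else 0\<^sub>m (rsz i) (csz j))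
               else
                  (if i = 1 \<and> j = 0 then S
                   else if 2 \<le> i \<and> j = i - 1 then 1\<^sub>m nG
                   else if i \<le> dR - 1 \<and> j = i then 1\<^sub>m nG
                   else if j = dR - 1 + i then transpose_mat HG
                   else 0\<^sub>m (rsz i) (csz j))))"

definition JX_MM :: "nat \<Rightarrow> nat \<Rightarrow> bit mat \<Rightarrow> bit mat \<Rightarrow> bit mat \<Rightarrow> bit mat \<Rightarrow> bit mat" where
  "JX_MM dR n JXC HG S \<gamma> =
    (let nG = dim_col HG; rG = dim_row HG;
         rsz = (\<lambda>i. dim_row JXC); csz = mm_csz dR n nG rG
     in block_mat 1 rsz (mm_nbc dR) csz
        (\<lambda>i j. if j = 0 then JXC
               else if j < dR then JXC * transpose_mat S
               else if j = 2 * dR - 1 then \<gamma>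
               else 0\<^sub>m (rsz i) (csz j)))"

definition JZ_MM :: "nat \<Rightarrow> bit mat \<Rightarrow> bit mat \<Rightarrow> bit mat" where
  "JZ_MM dR JZC HG =
    (let n = dim_col JZC; nG = dim_col HG; rG = dim_row HG;
         rsz = (\<lambda>i. dim_row JZC); csz = mm_csz dR n nG rG
     in block_mat 1 rsz (mm_nbc dR) csz
        (\<lambda>i j. if j = 0 then JZC else 0\<^sub>m (rsz i) (csz j)))"

definition P_MM :: "nat \<Rightarrow> nat \<Rightarrow> nat \<Rightarrow> nat \<Rightarrow> bit mat" where
  "P_MM dR n nG rG =
    (let csz = mm_csz dR n nG rG
     in block_mat 1 (\<lambda>i. n) (mm_nbc dR) csz
        (\<lambda>i j. if j = 0 then 1\<^sub>m n else 0\<^sub>m n (csz j)))"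

end

theory Submission
  imports Defs
begin


lemma bit_add_self: "(x::bit) + x = 0" by (cases x) auto

declare add_bit_eq_xor[simp del] mult_bit_eq_and[simp del]

lemma boff_0[simp]: "boff sz 0 = 0" by (simp add: boff_def)
lemma boff_Suc: "boff sz (Suc i) = boff sz i + sz i" by (simp add: boff_def)

lemma boff_mono: "i \<le> j \<Longrightarrow> boff sz i \<le> boff sz j"
  by (induction j) (auto simp: boff_Suc le_Suc_eq)

lemma boff_lt: "i < nb \<Longrightarrow> a < sz i \<Longrightarrow> boff sz i + a < boff sz nb"
proof -
  assume "i < nb" "a < sz i"
  hence "boff sz i + a < boff sz (Suc i)" by (simp add: boff_Suc)
  also have "\<dots> \<le> boff sz nb" using \<open>i < nb\<close> by (intro boff_mono) simp
  finally show ?thesis .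
qed

lemma bidx_eq: assumes "i < nb" "a < sz i" shows "bidx sz nb (boff sz i + a) = i"
  unfolding bidx_def
proof (rule the_equality)
  show "i < nb \<and> boff sz i \<le> boff sz i + a \<and> boff sz i + a < boff sz (Suc i)"
    using assms by (simp add: boff_Suc)
next
  fix i' assume h: "i' < nb \<and> boff sz i' \<le> boff sz i + a \<and> boff sz i + a < boff sz (Suc i')"
  show "i' = i"
  proof (rule ccontr)
    assume "i' \<noteq> i"
    then consider "i' < i" | "i < i'" by linarith
    thus False
    proof cases
      case 1 hence "boff sz (Suc i') \<le> boff sz i" by (intro boff_mono) simp
      with h show False by linarith
    next
      case 2 hence "boff sz (Suc i) \<le> boff sz i'" by (intro boff_mono) simp
      with h assms show False by (simp add: boff_Suc)
    qed
  qed
qed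

lemma block_mat_dims[simp]:
  "dim_row (block_mat nbr rsz nbc csz B) = boff rsz nbr"
  "dim_col (block_mat nbr rsz nbc csz B) = boff csz nbc"
  by (simp_all add: block_mat_def)

lemma block_mat_index:
  assumes "i < nbr" "a < rsz i" "j < nbc" "b < csz j"
  shows "block_mat nbr rsz nbc csz B $$ (boff rsz i + a, boff csz j + b) = B i j $$ (a, b)"
  using assms boff_lt[of i nbr a rsz] boff_lt[of j nbc b csz]
  by (simp add: block_mat_def bidx_eq)

lemma boff_decomp: "c < boff sz nb \<Longrightarrow> \<exists>j<nb. \<exists>b<sz j. c = boff sz j + b"
proof (induction nb)
  case 0 thus ?case by simp
next
  case (Suc nb)
  show ?case
  proof (cases "c < boff sz nb")
    case True thus ?thesis using Suc.IH by (meson less_SucI)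
  next
    case False
    hence "c - boff sz nb < sz nb" "c = boff sz nb + (c - boff sz nb)"
      using Suc.prems by (auto simp: boff_Suc)
    thus ?thesis by blast
  qed
qed

lemma sum_boff: "(\<Sum>r<boff sz nb. f r) = (\<Sum>i<nb. \<Sum>a<sz i. f (boff sz i + a))"
proof (induction nb)
  case 0 thus ?case by simp
next
  case (Suc nb)
  have "(\<Sum>r<boff sz (Suc nb). f r) = (\<Sum>r<boff sz nb. f r) + (\<Sum>a<sz nb. f (boff sz nb + a))"
  proof -
    have "(\<Sum>r<boff sz nb + sz nb. f r) = (\<Sum>r\<in>{0..<boff sz nb}. f r) + (\<Sum>r\<in>{boff sz nb..<boff sz nb + sz nb}. f r)"
      by (simp add: sum.atLeastLessThan_concat lessThan_atLeast0)
    also have "(\<Sum>r\<in>{boff sz nb..<boff sz nb + sz nb}. f r) = (\<Sum>a\<in>{0..<sz nb}. f (a + boff sz nb))"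
      using sum.shift_bounds_nat_ivl[of f 0 "boff sz nb" "sz nb"] by (metis add.commute add_0)
    finally show ?thesis by (simp add: boff_Suc lessThan_atLeast0 add.commute)
  qed
  thus ?case using Suc.IH by simp
qed


lemma vm_dim[simp]: "dim_vec (vm v M) = dim_col M" by (simp add: vm_def)

lemma vm_index: "v \<in> carrier_vec (dim_row M) \<Longrightarrow> c < dim_col M \<Longrightarrow>
   vm v M $ c = (\<Sum>r<dim_row M. M $$ (r, c) * v $ r)"
proof -
  assume v: "v \<in> carrier_vec (dim_row M)" and c: "c < dim_col M"
  have "vm v M $ c = row (transpose_mat M) c \<bullet> v" using c by (simp add: vm_def)
  also have "\<dots> = (\<Sum>r\<in>{0..<dim_row M}. row (transpose_mat M) c $ r * v $ r)"
    using v by (simp add: scalar_prod_def)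
  also have "\<dots> = (\<Sum>r<dim_row M. M $$ (r, c) * v $ r)"
    unfolding lessThan_atLeast0 by (rule sum.cong) (use c in simp_all)
  finally show ?thesis .
qed


lemma row_in_rs: fixes A :: "bit mat" assumes "i < dim_row A" shows "row A i \<in> rs A"
proof -
  have "vm (unit_vec (dim_row A) i) A = row A i"
  proof (rule eq_vecI)
    fix c assume "c < dim_vec (row A i)"
    hence c: "c < dim_col A" by simp
    have "vm (unit_vec (dim_row A) i) A $ c = (\<Sum>r<dim_row A. A $$ (r, c) * (if r = i then 1 else 0))"
      using c by (subst vm_index) (auto intro!: sum.cong simp: unit_vec_def)
    also have "\<dots> = A $$ (i, c)" using assms by (simp add: sum.delta if_distrib cong: if_cong)
    finally show "vm (unit_vec (dim_row A) i) A $ c = row A i $ c" using assms c by simp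
  qed simp
  moreover have "unit_vec (dim_row A) i \<in> carrier_vec (dim_row A)" by simp
  ultimately show ?thesis unfolding rs_def by (metis (mono_tags, lifting) mem_Collect_eq)
qed

lemma zero_in_rs: "0\<^sub>v (dim_col A) \<in> rs A"
proof -
  have "vm (0\<^sub>v (dim_row A)) A = 0\<^sub>v (dim_col A)"
    by (rule eq_vecI) (simp_all add: vm_index)
  moreover have "0\<^sub>v (dim_row A) \<in> carrier_vec (dim_row A)" by simp
  ultimately show ?thesis unfolding rs_def by (metis (mono_tags, lifting) mem_Collect_eq)
qed

lemma rs_subset_rows:
  assumes A: "A \<in> carrier_mat m n" and B: "B \<in> carrier_mat p n"
    and rows: "\<And>i. i < p \<Longrightarrow> row B i \<in> rs A"
  shows "rs B \<subseteq> rs A"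
proof
  fix x assume "x \<in> rs B"
  then obtain v where v: "v \<in> carrier_vec p" and x: "x = vm v B" using B unfolding rs_def by auto
  have "\<forall>i. \<exists>w. i < p \<longrightarrow> w \<in> carrier_vec m \<and> vm w A = row B i"
    using rows A unfolding rs_def by fastforce
  then obtain w where w: "\<And>i. i < p \<Longrightarrow> w i \<in> carrier_vec m \<and> vm (w i) A = row B i" by metis
  define u where "u = vec m (\<lambda>l. \<Sum>i<p. v $ i * w i $ l)"
  have "vm u A = x"
  proof (rule eq_vecI)
    show "dim_vec (vm u A) = dim_vec x" using A B x by simp
    fix c assume "c < dim_vec x"
    hence c: "c < n" using B x by simp
    have "vm u A $ c = (\<Sum>l<m. A $$ (l, c) * (\<Sum>i<p. v $ i * w i $ l))"
      using A c by (subst vm_index) (auto simp: u_def)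
    also have "\<dots> = (\<Sum>i<p. v $ i * (\<Sum>l<m. A $$ (l, c) * w i $ l))"
      by (simp add: sum_distrib_left sum.swap[of _ "{..<m}"] mult.left_commute)
    also have "\<dots> = (\<Sum>i<p. v $ i * (row B i $ c))"
    proof (rule sum.cong)
      fix i assume "i \<in> {..<p}"
      hence "vm (w i) A $ c = (\<Sum>l<m. A $$ (l, c) * w i $ l)" using w A c by (subst vm_index) auto
      thus "v $ i * (\<Sum>l<m. A $$ (l, c) * w i $ l) = v $ i * (row B i $ c)" using w \<open>i \<in> _\<close> by simp
    qed simp
    also have "\<dots> = x $ c" using x B c v by (subst x, subst vm_index) (auto intro!: sum.cong simp: mult.commute)
    finally show "vm u A $ c = x $ c" .
  qed
  moreover have "u \<in> carrier_vec (dim_row A)" using A by (simp add: u_def)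
  ultimately show "x \<in> rs A" unfolding rs_def by auto
qed


lemma mult_ind_bit[simp]: "(x::bit) * (if P then 1 else 0) = (if P then x else 0)" by simp
lemma mult_ind_bit2[simp]: "(if P then 1 else 0) * (x::bit) = (if P then x else 0)" by simp

lemma mm_csz0[simp]: "mm_csz dR n nG rG 0 = n" by (simp add: mm_csz_def)

lemma P_dims[simp]: "dim_row (P_MM dR n nG rG) = n" "dim_col (P_MM dR n nG rG) = boff (mm_csz dR n nG rG) (2*dR)"
  by (simp_all add: P_MM_def Let_def boff_Suc)

lemma P_index:
  assumes "l < n" "j < 2*dR" "b < mm_csz dR n nG rG j"
  shows "P_MM dR n nG rG $$ (l, boff (mm_csz dR n nG rG) j + b) = (if j = 0 \<and> l = b then 1 else 0)"
proof -
  have "P_MM dR n nG rG $$ (l, boff (mm_csz dR n nG rG) j + b) =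
    block_mat 1 (\<lambda>i. n) (2*dR) (mm_csz dR n nG rG) (\<lambda>i j. if j = 0 then 1\<^sub>m n else 0\<^sub>m n (mm_csz dR n nG rG j)) $$ (boff (\<lambda>i. n) 0 + l, boff (mm_csz dR n nG rG) j + b)"
    unfolding P_MM_def Let_def by simp
  also have "\<dots> = (if j = 0 then 1\<^sub>m n else 0\<^sub>m n (mm_csz dR n nG rG j)) $$ (l, b)"
    using assms by (subst block_mat_index) auto
  also have "\<dots> = (if j = 0 \<and> l = b then 1 else 0)" using assms by auto
  finally show ?thesis .
qed

lemma mult_P:
  assumes A: "A \<in> carrier_mat m n" and r: "r < m" and j: "j < 2*dR" and b: "b < mm_csz dR n nG rG j"
  shows "(A * P_MM dR n nG rG) $$ (r, boff (mm_csz dR n nG rG) j + b) = (if j = 0 then A $$ (r, b) else (0::bit))"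
proof -
  let ?c = "boff (mm_csz dR n nG rG) j + b"
  have c: "?c < dim_col (P_MM dR n nG rG)" using boff_lt[of j "2*dR" b "mm_csz dR n nG rG", OF j b] by simp
  have "(A * P_MM dR n nG rG) $$ (r, ?c) = (\<Sum>l\<in>{0..<n}. A $$ (r, l) * (if j = 0 \<and> l = b then 1 else 0))"
    using A r c by (simp add: scalar_prod_def P_index[OF _ j b])
  also have "\<dots> = (if j = 0 then A $$ (r, b) else 0)"
    using b by (cases "j = 0") (simp_all add: sum.delta sum.delta')
  finally show ?thesis .
qed

lemma mult_PT:
  assumes M: "M \<in> carrier_mat m (boff (mm_csz dR n nG rG) (2*dR))" and r: "r < m" and c: "c < n"
    and dR: "dR \<ge> 1"
  shows "(M * transpose_mat (P_MM dR n nG rG)) $$ (r, c) = (M $$ (r, c) :: bit)"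
proof -
  let ?csz = "mm_csz dR n nG rG"
  have "(M * transpose_mat (P_MM dR n nG rG)) $$ (r, c) =
        (\<Sum>l<boff ?csz (2*dR). M $$ (r, l) * P_MM dR n nG rG $$ (c, l))"
    using M r c by (simp add: scalar_prod_def lessThan_atLeast0)
  also have "\<dots> = (\<Sum>j<2*dR. \<Sum>b<?csz j. M $$ (r, boff ?csz j + b) * P_MM dR n nG rG $$ (c, boff ?csz j + b))"
    by (rule sum_boff)
  also have "\<dots> = (\<Sum>j<2*dR. if j = 0 then M $$ (r, c) else 0)"
  proof (rule sum.cong)
    fix j assume j: "j \<in> {..<2*dR}"
    have "(\<Sum>b<?csz j. M $$ (r, boff ?csz j + b) * P_MM dR n nG rG $$ (c, boff ?csz j + b))
        = (\<Sum>b<?csz j. M $$ (r, boff ?csz j + b) * (if j = 0 \<and> c = b then 1 else 0))"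
      using j c by (intro sum.cong) (simp_all add: P_index)
    also have "\<dots> = (if j = 0 then M $$ (r, c) else 0)"
      using c by (cases "j = 0") (simp_all add: sum.delta sum.delta')
    finally show "(\<Sum>b<?csz j. M $$ (r, boff ?csz j + b) * P_MM dR n nG rG $$ (c, boff ?csz j + b)) = (if j = 0 then M $$ (r, c) else 0)" .
  qed simp
  also have "\<dots> = M $$ (r, c)" using dR by (simp add: sum.delta)
  finally show ?thesis .
qed


lemma boff_le_total: "i \<le> nb \<Longrightarrow> boff sz i \<le> boff sz nb" by (rule boff_mono)

lemma claim1:
  fixes HX HG T :: "bit mat"
  assumes HX: "HX \<in> carrier_mat rX n" and HG: "HG \<in> carrier_mat rG nG" and T: "T \<in> carrier_mat rX rG"
    and dR: "dR \<ge> 2"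
  shows "rs HX = rs (HX_MM dR HX HG T * transpose_mat (P_MM dR n nG rG))"
proof -
  define rsz where "rsz = (\<lambda>i::nat. if i = 0 then rX else rG)"
  define csz where "csz = mm_csz dR n nG rG"
  define BX where "BX = (\<lambda>i j. if i = 0 then
                  (if j = 0 then HX else if j = dR then T else 0\<^sub>m (rsz i) (csz j))
               else
                  (if j = i then HG
                   else if j = dR - 1 + i then 1\<^sub>m rG
                   else if j = dR + i then 1\<^sub>m rG
                   else 0\<^sub>m (rsz i) (csz j)))"
  have dX: "dim_row HX = rX" "dim_col HX = n" "dim_row HG = rG" "dim_col HG = nG" using HX HG by auto
  have HXMM: "HX_MM dR HX HG T = block_mat dR rsz (2*dR) csz BX"
    unfolding HX_MM_def Let_def dX rsz_def csz_def BX_def by (rule refl)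
  define M where "M = HX_MM dR HX HG T * transpose_mat (P_MM dR n nG rG)"
  have Mc: "M \<in> carrier_mat (boff rsz dR) n" unfolding M_def HXMM
    by (intro carrier_matI) (simp_all only: index_mult_mat(2,3) index_transpose_mat(2,3) block_mat_dims P_dims)
  have Mi: "M $$ (r, c) = HX_MM dR HX HG T $$ (r, c)" if "r < boff rsz dR" "c < n" for r c
    unfolding M_def using that dR by (intro mult_PT) (auto simp: HXMM csz_def)
  have ent: "M $$ (boff rsz i + a, c) = (if i = 0 then HX $$ (a, c) else 0)"
    if "i < dR" "a < rsz i" "c < n" for i a c
  proof -
    have "M $$ (boff rsz i + a, c) = block_mat dR rsz (2*dR) csz BX $$ (boff rsz i + a, boff csz 0 + c)"
      using Mi[of "boff rsz i + a" c] boff_lt[of i dR a rsz] that by (simp add: HXMM)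
    also have "\<dots> = BX i 0 $$ (a, c)" using that dR by (intro block_mat_index) (auto simp: csz_def)
    also have "\<dots> = (if i = 0 then HX $$ (a, c) else 0)" using that dR by (auto simp: BX_def csz_def rsz_def)
    finally show ?thesis .
  qed
  have rX: "rX \<le> boff rsz dR" using boff_mono[of 1 dR rsz] dR by (simp add: boff_Suc rsz_def)
  show ?thesis unfolding M_def[symmetric]
  proof
    show "rs HX \<subseteq> rs M"
    proof (rule rs_subset_rows[OF Mc HX])
      fix i assume i: "i < rX"
      have "row HX i = row M i"
        using ent[of 0 i] i HX Mc dR rX by (intro eq_vecI) (auto simp: rsz_def)
      thus "row HX i \<in> rs M" using row_in_rs[of i M] i rX Mc by simp
    qed
    show "rs M \<subseteq> rs HX"
    proof (rule rs_subset_rows[OF HX Mc])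
      fix r assume r: "r < boff rsz dR"
      then obtain i a where ia: "i < dR" "a < rsz i" "r = boff rsz i + a" using boff_decomp by blast
      show "row M r \<in> rs HX"
      proof (cases "i = 0")
        case True
        have "row M r = row HX a"
          using ent[of i a] ia True HX Mc r by (intro eq_vecI) (auto simp: rsz_def)
        thus ?thesis using row_in_rs[of a HX] ia True HX by (simp add: rsz_def)
      next
        case False
        have "row M r = 0\<^sub>v n"
          using ent[of i a] ia False HX Mc r by (intro eq_vecI) auto
        thus ?thesis using zero_in_rs[of HX] HX by simp
      qed
    qed
  qed
qed

lemma claim3:
  fixes JXC HG S \<gamma> :: "bit mat"
  assumes JXC: "JXC \<in> carrier_mat m n" and dR: "dR \<ge> 2"
  shows "rs JXC = rs (JX_MM dR n JXC HG S \<gamma> * transpose_mat (P_MM dR n (dim_col HG) (dim_row HG)))"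
proof -
  define csz where "csz = mm_csz dR n (dim_col HG) (dim_row HG)"
  define BJ where "BJ = (\<lambda>(i::nat) j. if j = 0 then JXC
               else if j < dR then JXC * transpose_mat S
               else if j = 2 * dR - 1 then \<gamma>
               else 0\<^sub>m ((\<lambda>i. dim_row JXC) i) (csz j))"
  have JXE: "JX_MM dR n JXC HG S \<gamma> = block_mat 1 (\<lambda>i. dim_row JXC) (2*dR) csz BJ"
    unfolding JX_MM_def Let_def BJ_def csz_def by (rule refl)
  have dm: "dim_row JXC = m" using JXC by auto
  have b1: "boff (\<lambda>i. dim_row JXC) 1 = m" using dm by (simp add: boff_Suc)
  let ?M = "JX_MM dR n JXC HG S \<gamma> * transpose_mat (P_MM dR n (dim_col HG) (dim_row HG))"
  have Jc: "JX_MM dR n JXC HG S \<gamma> \<in> carrier_mat m (boff (mm_csz dR n (dim_col HG) (dim_row HG)) (2*dR))"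
    unfolding JXE csz_def by (intro carrier_matI) (simp_all only: block_mat_dims b1)
  have "?M = JXC"
  proof (rule eq_matI)
    fix r c assume rc: "r < dim_row JXC" "c < dim_col JXC"
    have r: "r < m" and c: "c < n" using rc JXC by auto
    have "?M $$ (r, c) = JX_MM dR n JXC HG S \<gamma> $$ (r, c)"
      using r c dR by (intro mult_PT[OF Jc]) auto
    also have "\<dots> = block_mat 1 (\<lambda>i. dim_row JXC) (2*dR) csz BJ $$ (boff (\<lambda>i. dim_row JXC) 0 + r, boff csz 0 + c)"
      by (simp only: JXE boff_0 add_0)
    also have "\<dots> = BJ 0 0 $$ (r, c)"
      by (rule block_mat_index) (use r c dR dm in \<open>auto simp: csz_def\<close>)
    also have "\<dots> = JXC $$ (r, c)" by (simp add: BJ_def)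
    finally show "?M $$ (r, c) = JXC $$ (r, c)" .
  next
    show "dim_row ?M = dim_row JXC" using Jc dm by simp
    show "dim_col ?M = dim_col JXC" using JXC by simp
  qed
  thus ?thesis by simp
qed

lemma claim4:
  fixes JZC HG :: "bit mat"
  assumes JZC: "JZC \<in> carrier_mat m n" and dR: "dR \<ge> 2"
  shows "rs (JZC * P_MM dR n (dim_col HG) (dim_row HG)) = rs (JZ_MM dR JZC HG)"
proof -
  let ?csz = "mm_csz dR n (dim_col HG) (dim_row HG)"
  define BJ where "BJ = (\<lambda>(i::nat) j. if j = 0 then JZC else 0\<^sub>m ((\<lambda>i. dim_row JZC) i) (?csz j))"
  have dm: "dim_row JZC = m" "dim_col JZC = n" using JZC by auto
  have JZE: "JZ_MM dR JZC HG = block_mat 1 (\<lambda>i. dim_row JZC) (2*dR) ?csz BJ"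
    unfolding JZ_MM_def Let_def BJ_def dm(2) by (rule refl)
  have b1: "boff (\<lambda>i. dim_row JZC) 1 = m" using dm by (simp add: boff_Suc)
  have Zc: "JZ_MM dR JZC HG \<in> carrier_mat m (boff ?csz (2*dR))"
    unfolding JZE by (intro carrier_matI) (simp_all only: block_mat_dims b1)
  have Pc: "JZC * P_MM dR n (dim_col HG) (dim_row HG) \<in> carrier_mat m (boff ?csz (2*dR))"
    using JZC by (intro carrier_matI) (simp_all only: index_mult_mat(2,3) P_dims carrier_matD)
  have "JZC * P_MM dR n (dim_col HG) (dim_row HG) = JZ_MM dR JZC HG"
  proof (rule eq_matI)
    fix r c assume rc: "r < dim_row (JZ_MM dR JZC HG)" "c < dim_col (JZ_MM dR JZC HG)"
    hence r: "r < m" and c: "c < boff ?csz (2*dR)" using Zc by auto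
    then obtain j b where jb: "j < 2*dR" "b < ?csz j" "c = boff ?csz j + b" using boff_decomp by blast
    have "(JZC * P_MM dR n (dim_col HG) (dim_row HG)) $$ (r, c) = (if j = 0 then JZC $$ (r, b) else 0)"
      using mult_P[OF JZC r jb(1,2)] jb(3) by simp
    also have "\<dots> = BJ 0 j $$ (r, b)" using jb r dm by (auto simp: BJ_def)
    also have "\<dots> = block_mat 1 (\<lambda>i. dim_row JZC) (2*dR) ?csz BJ $$ (boff (\<lambda>i. dim_row JZC) 0 + r, boff ?csz j + b)"
      by (rule block_mat_index[symmetric]) (use jb r dm in auto)
    also have "\<dots> = JZ_MM dR JZC HG $$ (r, c)"
      by (simp only: JZE boff_0 add_0 jb(3))
    finally show "(JZC * P_MM dR n (dim_col HG) (dim_row HG)) $$ (r, c) = JZ_MM dR JZC HG $$ (r, c)" .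
  next
    show "dim_row (JZC * P_MM dR n (dim_col HG) (dim_row HG)) = dim_row (JZ_MM dR JZC HG)" using Zc Pc dm by simp
    show "dim_col (JZC * P_MM dR n (dim_col HG) (dim_row HG)) = dim_col (JZ_MM dR JZC HG)" using Zc Pc by simp
  qed
  thus ?thesis by simp
qed

definition "rszZ rZ nG = (\<lambda>i::nat. if i = 0 then rZ else nG)"
definition "BZ dR HZ HG S n rZ nG rG = (\<lambda>i j. if i = 0 then
                  (if j = 0 then HZ else 0\<^sub>m (rszZ rZ nG i) (mm_csz dR n nG rG j))
               else
                  (if i = 1 \<and> j = 0 then S
                   else if 2 \<le> i \<and> j = i - 1 then 1\<^sub>m nG
                   else if i \<le> dR - 1 \<and> j = i then 1\<^sub>m nG
                   else if j = dR - 1 + i then transpose_mat HG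
                   else 0\<^sub>m (rszZ rZ nG i) (mm_csz dR n nG rG j)))"

lemma HZMM_eq:
  fixes HZ HG S :: "bit mat"
  assumes HZ: "HZ \<in> carrier_mat rZ n" and HG: "HG \<in> carrier_mat rG nG"
  shows "HZ_MM dR HZ HG S = block_mat (Suc dR) (rszZ rZ nG) (2*dR) (mm_csz dR n nG rG) (BZ dR HZ HG S n rZ nG rG)"
proof -
  have dX: "dim_row HZ = rZ" "dim_col HZ = n" "dim_row HG = rG" "dim_col HG = nG" using HZ HG by auto
  show ?thesis unfolding HZ_MM_def Let_def dX rszZ_def BZ_def by (rule refl)
qed

lemma boff_rszZ: "boff (rszZ rZ nG) (Suc i) = rZ + i * nG"
  by (induction i) (simp_all add: boff_Suc rszZ_def)

lemma claim2:
  fixes HZ HG S :: "bit mat"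
  assumes HZ: "HZ \<in> carrier_mat rZ n" and HG: "HG \<in> carrier_mat rG nG" and dR: "dR \<ge> 2"
  shows "rs (HZ * P_MM dR n nG rG) \<subseteq> rs (HZ_MM dR HZ HG S)"
proof -
  let ?csz = "mm_csz dR n nG rG"
  let ?M = "HZ_MM dR HZ HG S"
  have Mc: "?M \<in> carrier_mat (boff (rszZ rZ nG) (Suc dR)) (boff ?csz (2*dR))"
    unfolding HZMM_eq[OF HZ HG] by (intro carrier_matI) (simp_all only: block_mat_dims)
  have Pc: "HZ * P_MM dR n nG rG \<in> carrier_mat rZ (boff ?csz (2*dR))" using HZ by (intro carrier_matI) (simp_all only: index_mult_mat(2,3) P_dims carrier_matD)
  show ?thesis
  proof (rule rs_subset_rows[OF Mc Pc])
    fix r assume r: "r < rZ"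
    have rM: "r < dim_row ?M" using Mc boff_rszZ[of rZ nG dR] r by simp
    have "row (HZ * P_MM dR n nG rG) r = row ?M r"
    proof (rule eq_vecI)
      fix c assume "c < dim_vec (row ?M r)"
      hence c: "c < boff ?csz (2*dR)" using Mc by simp
      then obtain j b where jb: "j < 2*dR" "b < ?csz j" "c = boff ?csz j + b" using boff_decomp by blast
      have "row (HZ * P_MM dR n nG rG) r $ c = (if j = 0 then HZ $$ (r, b) else 0)"
        using mult_P[OF HZ r jb(1,2)] jb(3) r c carrier_matD[OF Pc] by simp
      also have "\<dots> = BZ dR HZ HG S n rZ nG rG 0 j $$ (r, b)"
        using jb r by (auto simp: BZ_def rszZ_def)
      also have "\<dots> = ?M $$ (boff (rszZ rZ nG) 0 + r, boff ?csz j + b)"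
        unfolding HZMM_eq[OF HZ HG] by (rule block_mat_index[symmetric]) (use jb r in \<open>auto simp: rszZ_def\<close>)
      also have "\<dots> = row ?M r $ c" using jb rM c Mc by simp
      finally show "row (HZ * P_MM dR n nG rG) r $ c = row ?M r $ c" .
    qed (use Mc Pc in simp)
    thus "row (HZ * P_MM dR n nG rG) r \<in> rs ?M" using row_in_rs[OF rM] by simp
  qed
qed


lemma sum_one_mat_bit: "b < N \<Longrightarrow> (\<Sum>a<N. (1\<^sub>m N $$ (a, b)) * (x $ a :: bit)) = x $ b"
  by (simp add: sum.delta' cong: if_cong)

lemma claim5core:
  fixes HZ HG S :: "bit mat" and x z :: "bit vec"
  assumes HZ: "HZ \<in> carrier_mat rZ n" and HG: "HG \<in> carrier_mat rG nG" and S: "S \<in> carrier_mat nG n"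
    and dR: "dR \<ge> 2"
    and x: "x \<in> carrier_vec nG" and kx: "HG *\<^sub>v x = 0\<^sub>v rG"
    and z: "z \<in> carrier_vec (boff (mm_csz dR n nG rG) (2*dR))"
    and zi: "\<And>j b. j < 2*dR \<Longrightarrow> b < mm_csz dR n nG rG j \<Longrightarrow>
                z $ (boff (mm_csz dR n nG rG) j + b) = (if j = 0 then vm x S $ b else 0)"
  shows "z \<in> rs (HZ_MM dR HZ HG S)"
proof -
  let ?csz = "mm_csz dR n nG rG"
  let ?rsz = "rszZ rZ nG"
  let ?B = "BZ dR HZ HG S n rZ nG rG"
  let ?M = "HZ_MM dR HZ HG S"
  have ME: "?M = block_mat (Suc dR) ?rsz (2*dR) ?csz ?B" by (rule HZMM_eq[OF HZ HG])
  have Mc: "?M \<in> carrier_mat (boff ?rsz (Suc dR)) (boff ?csz (2*dR))"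
    unfolding ME by (intro carrier_matI) (simp_all only: block_mat_dims)
  define y where "y = vec (boff ?rsz (Suc dR)) (\<lambda>r. if r < rZ then 0 else x $ ((r - rZ) mod nG))"
  have yc: "y \<in> carrier_vec (dim_row ?M)" using Mc by (simp add: y_def)
  have yv: "y $ (boff ?rsz i + a) = (if i = 0 then 0 else x $ a)" if "i < Suc dR" "a < ?rsz i" for i a
  proof -
    have lt: "boff ?rsz i + a < boff ?rsz (Suc dR)" using boff_lt[of i "Suc dR" a ?rsz] that by simp
    show ?thesis
    proof (cases i)
      case 0 thus ?thesis using that lt by (simp add: y_def rszZ_def)
    next
      case (Suc i')
      hence "boff ?rsz i = rZ + i' * nG" by (simp add: boff_rszZ)
      thus ?thesis using that lt Suc by (simp add: y_def rszZ_def)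
    qed
  qed
  have "vm y ?M = z"
  proof (rule eq_vecI)
    show dims: "dim_vec (vm y ?M) = dim_vec z" using Mc z by simp
    fix c assume "c < dim_vec z"
    hence c: "c < boff ?csz (2*dR)" using z by simp
    then obtain j b where jb: "j < 2*dR" "b < ?csz j" and cjb: "c = boff ?csz j + b" using boff_decomp by blast
    define G where "G = (\<lambda>i. if i = 0 then 0 else (\<Sum>a<nG. ?B i j $$ (a, b) * x $ a))"
    have "vm y ?M $ c = (\<Sum>r<boff ?rsz (Suc dR). ?M $$ (r, c) * y $ r)"
      using yc c Mc by (subst vm_index) auto
    also have "\<dots> = (\<Sum>i<Suc dR. \<Sum>a<?rsz i. ?M $$ (boff ?rsz i + a, c) * y $ (boff ?rsz i + a))"
      by (rule sum_boff)
    also have "\<dots> = (\<Sum>i<Suc dR. G i)"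
    proof (rule sum.cong)
      fix i assume i: "i \<in> {..<Suc dR}"
      have "(\<Sum>a<?rsz i. ?M $$ (boff ?rsz i + a, c) * y $ (boff ?rsz i + a))
          = (\<Sum>a<?rsz i. ?B i j $$ (a, b) * (if i = 0 then 0 else x $ a))"
        using i jb unfolding cjb by (intro sum.cong) (simp_all add: yv ME block_mat_index)
      also have "\<dots> = G i" by (cases "i = 0") (simp_all add: G_def rszZ_def)
      finally show "(\<Sum>a<?rsz i. ?M $$ (boff ?rsz i + a, c) * y $ (boff ?rsz i + a)) = G i" .
    qed simp
    also have "\<dots> = z $ c"
    proof -
      consider (u0) "j = 0" | (uj) "1 \<le> j" "j < dR" | (w) "dR \<le> j" by linarith
      thus ?thesis
      proof cases
        case u0
        have bn: "b < n" using jb u0 by simp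
        have "G i = (if i = 1 then vm x S $ b else 0)" if "i < Suc dR" for i
        proof -
          have "G 1 = (\<Sum>a<nG. S $$ (a, b) * x $ a)" using u0 by (simp add: G_def BZ_def)
          also have "\<dots> = vm x S $ b" using S x bn by (subst vm_index) auto
          finally have g1: "G 1 = vm x S $ b" .
          have "G i = 0" if "i \<noteq> 1" "i < Suc dR"
            using that u0 bn by (auto simp: G_def BZ_def rszZ_def intro!: sum.neutral)
          thus ?thesis using g1 that by auto
        qed
        hence "(\<Sum>i<Suc dR. G i) = (\<Sum>i<Suc dR. if i = 1 then vm x S $ b else 0)" by (intro sum.cong) auto
        also have "\<dots> = vm x S $ b" using dR by (simp add: sum.delta')
        finally show ?thesis using zi[OF jb] cjb u0 by simp
      next
        case uj
        have bn: "b < nG" using jb uj by (simp add: mm_csz_def)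
        have "G i = (if i = Suc j then x $ b else 0) + (if i = j then x $ b else 0)" if iS: "i < Suc dR" for i
        proof (cases "i = 0")
          case True thus ?thesis using uj by (simp add: G_def)
        next
          case False
          have ent: "?B i j $$ (a, b) = (if i = Suc j \<or> i = j then (if a = b then 1 else 0) else 0)" if "a < nG" for a
            using that uj bn iS False by (auto simp: BZ_def rszZ_def mm_csz_def)
          have "G i = (\<Sum>a<nG. ?B i j $$ (a, b) * x $ a)" using False by (simp add: G_def)
          also have "\<dots> = (\<Sum>a<nG. if i = Suc j \<or> i = j then (if a = b then x $ a else 0) else 0)"
            by (rule sum.cong) (simp_all add: ent)
          also have "\<dots> = (if i = Suc j \<or> i = j then x $ b else 0)"
            using bn by (cases "i = Suc j \<or> i = j") (simp_all add: sum.delta')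
          also have "\<dots> = (if i = Suc j then x $ b else 0) + (if i = j then x $ b else 0)" by auto
          finally show ?thesis .
        qed
        hence "(\<Sum>i<Suc dR. G i) = (\<Sum>i<Suc dR. (if i = Suc j then x $ b else 0) + (if i = j then x $ b else 0))"
          by (intro sum.cong) auto
        also have "\<dots> = x $ b + x $ b" using uj by (simp add: sum.distrib sum.delta')
        also have "\<dots> = 0" by (rule bit_add_self)
        finally show ?thesis using zi[OF jb] cjb uj by simp
      next
        case w
        have bn: "b < rG" using jb w by (simp add: mm_csz_def)
        have "G i = 0" if "i < Suc dR" for i
        proof -
          have "?B i j $$ (a, b) = (if j = dR - 1 + i then HG $$ (b, a) else 0)" if "a < nG" "i \<noteq> 0" for a
            using that w bn \<open>i < Suc dR\<close> HG by (auto simp: BZ_def rszZ_def mm_csz_def)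
          hence ent: "\<And>a. a < nG \<Longrightarrow> i \<noteq> 0 \<Longrightarrow> ?B i j $$ (a, b) * x $ a = (if j = dR - 1 + i then HG $$ (b, a) * x $ a else 0)"
            by simp
          have "i \<noteq> 0 \<Longrightarrow> G i = (if j = dR - 1 + i then (\<Sum>a<nG. HG $$ (b, a) * x $ a) else 0)"
          proof -
            assume i0: "i \<noteq> 0"
            have "G i = (\<Sum>a<nG. ?B i j $$ (a, b) * x $ a)" using i0 by (simp add: G_def)
            also have "\<dots> = (\<Sum>a<nG. if j = dR - 1 + i then HG $$ (b, a) * x $ a else 0)"
              by (rule sum.cong) (simp_all add: ent i0)
            also have "\<dots> = (if j = dR - 1 + i then (\<Sum>a<nG. HG $$ (b, a) * x $ a) else 0)"
              by (cases "j = dR - 1 + i") simp_all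
            finally show ?thesis .
          qed
          moreover have "(\<Sum>a<nG. HG $$ (b, a) * x $ a) = (HG *\<^sub>v x) $ b"
            using HG x bn by (simp add: scalar_prod_def lessThan_atLeast0)
          ultimately show ?thesis using kx bn by (cases "i = 0") (auto simp: G_def)
        qed
        hence "(\<Sum>i<Suc dR. G i) = 0" by simp
        thus ?thesis using zi[OF jb] cjb w dR by simp
      qed
    qed
    finally show "vm y ?M $ c = z $ c" .
  qed
  thus ?thesis using yc unfolding rs_def by auto
qed


theorem lemma5:
  fixes n rX rZ k kg q nG rG dR :: nat
    and HX HZ JX JZ FX FZ :: "bit mat"
    and JZA JZC JXA JXC Jbar Jbar_inv :: "bit mat"
    and HG S T \<gamma> :: "bit mat"
  assumes dims:
      "HX \<in> carrier_mat rX n" "HZ \<in> carrier_mat rZ n"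
      "JX \<in> carrier_mat k n" "JZ \<in> carrier_mat k n"
      "FX \<in> carrier_mat kg n" "FZ \<in> carrier_mat kg n"
    and memX: "direct_sum3 n (kerm HX) (rs HZ) (rs JZ) (rs FZ)"
    and memZ: "direct_sum3 n (kerm HZ) (rs HX) (rs JX) (rs FX)"
    and dualJ: "JX * transpose_mat JZ = 1\<^sub>m k"
    and dualF: "FX * transpose_mat FZ = 1\<^sub>m kg"
    and qk: "q \<le> k"
    and Jbar: "Jbar \<in> carrier_mat k k" "Jbar_inv \<in> carrier_mat k k"
      "Jbar * Jbar_inv = 1\<^sub>m k" "Jbar_inv * Jbar = 1\<^sub>m k"
    and JZsplit: "JZA \<in> carrier_mat q n" "JZC \<in> carrier_mat (k - q) n"
      "JZA @\<^sub>r JZC = Jbar * JZ"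
    and JXsplit: "JXA \<in> carrier_mat q n" "JXC \<in> carrier_mat (k - q) n"
      "JXA @\<^sub>r JXC = transpose_mat Jbar_inv * JX"
    and dR: "dR \<ge> 2"
    and glue: "HG \<in> carrier_mat rG nG" "S \<in> carrier_mat nG n" "T \<in> carrier_mat rX rG"
      "HX * transpose_mat S = T * HG"
    and fine: "\<exists>m U. U \<in> carrier_mat m n \<and>
                 (\<forall>i < m. row U i \<in> set_sum (rs HZ) (rs FZ)) \<and>
                 rs (JZA @\<^sub>r U) = (\<lambda>x. vm x S) ` kerm HG"
    and gamma: "\<gamma> \<in> carrier_mat (k - q) rG" "JXC * transpose_mat S = \<gamma> * HG"
  shows
    "rs HX = rs (HX_MM dR HX HG T * transpose_mat (P_MM dR n nG rG)) \<and>
     rs (HZ * P_MM dR n nG rG) \<subseteq> rs (HZ_MM dR HZ HG S) \<and>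
     rs JXC = rs (JX_MM dR n JXC HG S \<gamma> * transpose_mat (P_MM dR n nG rG)) \<and>
     rs (JZC * P_MM dR n nG rG) = rs (JZ_MM dR JZC HG) \<and>
     rs (JZA * P_MM dR n nG rG) \<subseteq> rs (HZ_MM dR HZ HG S)"
  proof -
  have dG: "dim_row HG = rG" "dim_col HG = nG" using glue(1) by auto
  have c1: "rs HX = rs (HX_MM dR HX HG T * transpose_mat (P_MM dR n nG rG))"
    by (rule claim1[OF dims(1) glue(1) glue(3) dR])
  have c2: "rs (HZ * P_MM dR n nG rG) \<subseteq> rs (HZ_MM dR HZ HG S)"
    by (rule claim2[OF dims(2) glue(1) dR])
  have c3: "rs JXC = rs (JX_MM dR n JXC HG S \<gamma> * transpose_mat (P_MM dR n nG rG))"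
    using claim3[OF JXsplit(2) dR, of HG S \<gamma>] dG by simp
  have c4: "rs (JZC * P_MM dR n nG rG) = rs (JZ_MM dR JZC HG)"
    using claim4[OF JZsplit(2) dR, of HG] dG by simp
  obtain m U where U: "U \<in> carrier_mat m n" and rsU: "rs (JZA @\<^sub>r U) = (\<lambda>x. vm x S) ` kerm HG"
    using fine by blast
  let ?csz = "mm_csz dR n nG rG"
  have Mc: "HZ_MM dR HZ HG S \<in> carrier_mat (boff (rszZ rZ nG) (Suc dR)) (boff ?csz (2*dR))"
    unfolding HZMM_eq[OF dims(2) glue(1)] by (intro carrier_matI) (simp_all only: block_mat_dims)
  have Pc: "JZA * P_MM dR n nG rG \<in> carrier_mat q (boff ?csz (2*dR))"
    using JZsplit(1) by (intro carrier_matI) (simp_all only: index_mult_mat(2,3) P_dims carrier_matD)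
  have c5: "rs (JZA * P_MM dR n nG rG) \<subseteq> rs (HZ_MM dR HZ HG S)"
  proof (rule rs_subset_rows[OF Mc Pc])
    fix i assume i: "i < q"
    have AU: "JZA @\<^sub>r U \<in> carrier_mat (q + m) n" using JZsplit(1) U by auto
    have "row JZA i = row (JZA @\<^sub>r U) i"
      using AU JZsplit(1) U i by (intro eq_vecI) (auto simp: append_rows_def)
    moreover have "row (JZA @\<^sub>r U) i \<in> rs (JZA @\<^sub>r U)" using AU i by (intro row_in_rs) auto
    ultimately obtain x where x: "x \<in> kerm HG" and rx: "row JZA i = vm x S" using rsU by auto
    have xc: "x \<in> carrier_vec nG" and kx: "HG *\<^sub>v x = 0\<^sub>v rG" using x dG by (auto simp: kerm_def)
    show "row (JZA * P_MM dR n nG rG) i \<in> rs (HZ_MM dR HZ HG S)"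
    proof (rule claim5core[OF dims(2) glue(1) glue(2) dR xc kx])
      show "row (JZA * P_MM dR n nG rG) i \<in> carrier_vec (boff ?csz (2*dR))" using carrier_matD[OF Pc] by (intro carrier_vecI) simp
      fix j b assume jb: "j < 2*dR" "b < ?csz j"
      have lt: "boff ?csz j + b < boff ?csz (2*dR)" using boff_lt[of j "2*dR" b ?csz] jb by simp
      have "row (JZA * P_MM dR n nG rG) i $ (boff ?csz j + b) = (JZA * P_MM dR n nG rG) $$ (i, boff ?csz j + b)"
        using carrier_matD[OF Pc] i lt by simp
      also have "\<dots> = (if j = 0 then JZA $$ (i, b) else 0)" by (rule mult_P[OF JZsplit(1) i jb])
      also have "\<dots> = (if j = 0 then vm x S $ b else 0)"
        using rx[symmetric] JZsplit(1) i jb by auto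
      finally show "row (JZA * P_MM dR n nG rG) i $ (boff ?csz j + b) = (if j = 0 then vm x S $ b else 0)" .
    qed
  qed
  show ?thesis using c1 c2 c3 c4 c5 by blast
qed

end
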